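(* Let $r\ge0$ and let $A$ be an $E_{r+1}$-cofibrant dga. Then: (1) for all $n\ge0$ and $p\in\mathbb{Z}$, $(\mathrm{Dec}W)_pA^n=W_{p-n}A^n$; (2) the filtered dga $(A,\mathrm{Dec}W)$ is $E_r$-cofibrant.
   Context: Filtered dga's: a filtered dga over a field $\mathbf{k}$ of characteristic $0$ is a non-negatively graded commutative dga $A$ (differential of degree $+1$) with an increasing multiplicative regular exhaustive filtration $W$ by subcomplexes, with filtered unit ($\mathbf{k}$ trivially filtered). Deligne's décalage: $(\mathrm{Dec}W)_pA^n=\{x\in W_{p-n}A^n: dx\in W_{p-n-1}A^{n+1}\}$. $E_r$-cofibrant dga's: given a filtered dga $A$, an $E_r$-cofibrant extension of degree $n$ and weight $p$ is $A\otimes_\xi\Lambda V$ where $V$ is a vector space concentrated in degree $n$ and pure weight $p$ ($W_{p-1}V=0$, $W_pV=V$) and $\xi:V\to W_{p-r}A^{n+1}$ is linear with $d\circ\xi=0$; differential $dv=\xi(v)$ and filtration extended multiplicatively. An $E_r$-cofibrant dga is the colimit of a sequence of $E_r$-cofibrant extensions starting from $\mathbf{k}$. *)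

theory Defs
  imports Complex_Main "HOL-Library.Multiset"
begin

text \<open>A non-negatively graded commutative dga A = (A^n)_{n>=0} over the field 'k is encoded
  inside an ambient 'k-vector space 'a: gr n is the subspace A^n (distinct degrees meet only
  in 0, so the family is a graded vector space; the total algebra is the external direct sum).
  mul, unit, dif are the product, unit and differential (degree +1); filt p n is W_p A^n.\<close>

record ('k, 'a) fdga =
  sc   :: "'k \<Rightarrow> 'a \<Rightarrow> 'a"
  gr   :: "nat \<Rightarrow> 'a set"
  mul  :: "'a \<Rightarrow> 'a \<Rightarrow> 'a"
  unit :: 'a
  dif  :: "'a \<Rightarrow> 'a"
  filt :: "int \<Rightarrow> nat \<Rightarrow> 'a set"

definition sgn_mul :: "nat \<Rightarrow> 'a::ab_group_add \<Rightarrow> 'a" where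
  "sgn_mul k x = (if even k then x else - x)"

definition is_fdga :: "('k::field, 'a::ab_group_add) fdga \<Rightarrow> bool" where
  "is_fdga A \<longleftrightarrow>
     vector_space (sc A) \<and>
     (\<forall>n. module.subspace (sc A) (gr A n)) \<and>
     (\<forall>m n. m \<noteq> n \<longrightarrow> gr A m \<inter> gr A n = {0}) \<and>
     \<comment> \<open>product: graded, bilinear, associative, graded commutative, unital\<close>
     (\<forall>m n. \<forall>x\<in>gr A m. \<forall>y\<in>gr A n. mul A x y \<in> gr A (m + n)) \<and>
     (\<forall>m n. \<forall>x\<in>gr A m. \<forall>x'\<in>gr A m. \<forall>y\<in>gr A n.
        mul A (x + x') y = mul A x y + mul A x' y \<and> mul A y (x + x') = mul A y x + mul A y x') \<and>
     (\<forall>m n c. \<forall>x\<in>gr A m. \<forall>y\<in>gr A n.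
        mul A (sc A c x) y = sc A c (mul A x y) \<and> mul A x (sc A c y) = sc A c (mul A x y)) \<and>
     (\<forall>l m n. \<forall>x\<in>gr A l. \<forall>y\<in>gr A m. \<forall>z\<in>gr A n. mul A (mul A x y) z = mul A x (mul A y z)) \<and>
     (\<forall>m n. \<forall>x\<in>gr A m. \<forall>y\<in>gr A n. mul A x y = sgn_mul (m * n) (mul A y x)) \<and>
     unit A \<in> gr A 0 \<and>
     (\<forall>n. \<forall>x\<in>gr A n. mul A (unit A) x = x \<and> mul A x (unit A) = x) \<and>
     \<comment> \<open>differential: degree +1, linear, square zero, graded Leibniz rule\<close>
     (\<forall>n. \<forall>x\<in>gr A n. dif A x \<in> gr A (Suc n)) \<and>
     (\<forall>n c. \<forall>x\<in>gr A n. \<forall>y\<in>gr A n.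
        dif A (x + y) = dif A x + dif A y \<and> dif A (sc A c x) = sc A c (dif A x)) \<and>
     (\<forall>n. \<forall>x\<in>gr A n. dif A (dif A x) = 0) \<and>
     (\<forall>m n. \<forall>x\<in>gr A m. \<forall>y\<in>gr A n.
        dif A (mul A x y) = mul A (dif A x) y + sgn_mul m (mul A x (dif A y))) \<and>
     \<comment> \<open>filtration: increasing, by subcomplexes, multiplicative, regular, exhaustive, filtered unit\<close>
     (\<forall>p n. module.subspace (sc A) (filt A p n) \<and> filt A p n \<subseteq> gr A n) \<and>
     (\<forall>p n. filt A p n \<subseteq> filt A (p + 1) n) \<and>
     (\<forall>p n. \<forall>x\<in>filt A p n. dif A x \<in> filt A p (Suc n)) \<and>
     (\<forall>p q m n. \<forall>x\<in>filt A p m. \<forall>y\<in>filt A q n. mul A x y \<in> filt A (p + q) (m + n)) \<and>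
     (\<forall>n. \<exists>q. filt A q n = {0}) \<and>
     (\<forall>n. (\<Union>p. filt A p n) = gr A n) \<and>
     unit A \<in> filt A 0 0"

definition Dec :: "('k, 'a) fdga \<Rightarrow> int \<Rightarrow> nat \<Rightarrow> 'a set" where
  "Dec A p n = {x \<in> filt A (p - int n) n. dif A x \<in> filt A (p - int n - 1) (Suc n)}"

definition dec_fdga :: "('k, 'a) fdga \<Rightarrow> ('k, 'a) fdga" where
  "dec_fdga A = A\<lparr>filt := Dec A\<rparr>"

text \<open>Monomials in a basis X of a space V concentrated in degree n: multisets over X,
  required to be sets when n is odd (free graded-commutative algebra: polynomial algebra for
  n even, exterior algebra for n odd).  The monomial element is the product of the factors in
  some order; the order only affects the sign, which is irrelevant where it is used below.\<close>

definition monoms :: "'a set \<Rightarrow> nat \<Rightarrow> 'a multiset set" where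
  "monoms X n = {M. set_mset M \<subseteq> X \<and> (odd n \<longrightarrow> (\<forall>x. count M x \<le> 1))}"

definition mprod :: "('k, 'a) fdga \<Rightarrow> 'a multiset \<Rightarrow> 'a" where
  "mprod A M = foldr (mul A) (SOME xs. mset xs = M) (unit A)"

definition coef_ok ::
  "'a set \<Rightarrow> nat \<Rightarrow> nat \<Rightarrow> (nat \<Rightarrow> nat \<Rightarrow> 'a set) \<Rightarrow> ('a multiset \<Rightarrow> 'a::zero) \<Rightarrow> bool" where
  "coef_ok X n m C a \<longleftrightarrow> finite {M. a M \<noteq> 0} \<and>
     (\<forall>M. a M \<noteq> 0 \<longrightarrow> M \<in> monoms X n \<and> size M * n \<le> m \<and> a M \<in> C (size M) (m - size M * n))"

definition comb :: "('k, 'a::ab_group_add) fdga \<Rightarrow> ('a multiset \<Rightarrow> 'a) \<Rightarrow> 'a" where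
  "comb A a = (\<Sum>M\<in>{M. a M \<noteq> 0}. mul A (a M) (mprod A M))"

text \<open>Inside A, the sub-graded-space B' (degreewise) is the E_r-cofibrant extension
  B \<otimes>_xi \<Lambda>V of the sub-dga B by V concentrated in degree n and of pure weight p, with
  xi = d restricted to V, and with the filtration induced by W on B' equal to the
  multiplicative extension of the filtration induced on B:
  W_q (B \<otimes> \<Lambda>V) = sum over k of W_(q-kp) B \<otimes> \<Lambda>^k V.\<close>

definition is_ext ::
  "nat \<Rightarrow> ('k::field, 'a::ab_group_add) fdga \<Rightarrow> (nat \<Rightarrow> 'a set) \<Rightarrow> (nat \<Rightarrow> 'a set) \<Rightarrow> bool" where
  "is_ext r A B B' \<longleftrightarrow>
     (\<exists>n p V X.
        module.subspace (sc A) V \<and> V \<subseteq> gr A n \<and>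
        X \<subseteq> V \<and> \<not> module.dependent (sc A) X \<and> module.span (sc A) X = V \<and>
        (\<forall>v\<in>V. dif A v \<in> filt A (p - int r) (Suc n) \<inter> B (Suc n)) \<and>
        \<comment> \<open>B' is freely generated by V over B\<close>
        (\<forall>m. B' m = {comb A a | a. coef_ok X n m (\<lambda>k d. B d) a}) \<and>
        (\<forall>m a. coef_ok X n m (\<lambda>k d. B d) a \<and> comb A a = 0 \<longrightarrow> (\<forall>M. a M = 0)) \<and>
        \<comment> \<open>multiplicatively extended filtration, V of pure weight p\<close>
        (\<forall>q m. filt A q m \<inter> B' m =
           {comb A a | a. coef_ok X n m (\<lambda>k d. filt A (q - int k * p) d \<inter> B d) a}))"

text \<open>A is E_r-cofibrant: a filtered dga which is (isomorphic to) the colimit of a sequence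
  k = A_0 \<subseteq> A_1 \<subseteq> ... of E_r-cofibrant extensions; internally: an increasing exhausting
  sequence of sub-graded-spaces B i, starting with the trivially filtered ground field,
  each an E_r-cofibrant extension of the previous one.\<close>

definition E_cofibrant :: "nat \<Rightarrow> ('k::field, 'a::ab_group_add) fdga \<Rightarrow> bool" where
  "E_cofibrant r A \<longleftrightarrow> is_fdga A \<and>
     (\<exists>B :: nat \<Rightarrow> nat \<Rightarrow> 'a set.
        unit A \<noteq> 0 \<and>
        B 0 0 = range (\<lambda>c. sc A c (unit A)) \<and> (\<forall>m. m \<noteq> 0 \<longrightarrow> B 0 m = {0}) \<and>
        (\<forall>q m. filt A q m \<inter> B 0 m = (if q \<ge> 0 then B 0 m else {0})) \<and>
        (\<forall>i m. B i m \<subseteq> B (Suc i) m \<and> B i m \<subseteq> gr A m) \<and>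
        (\<forall>m. (\<Union>i. B i m) = gr A m) \<and>
        (\<forall>i. is_ext r A (B i) (B (Suc i))))"

end

theory Submission
  imports Defs
begin

lemma C2: assumes "is_fdga A" shows "(\<forall>n. module.subspace (sc A) (gr A n))"
  using assms unfolding is_fdga_def by (elim conjE) assumption
lemma C4: assumes "is_fdga A" shows "(\<forall>m n. \<forall>x\<in>gr A m. \<forall>y\<in>gr A n. mul A x y \<in> gr A (m + n))"
  using assms unfolding is_fdga_def by (elim conjE) assumption
lemma C9: assumes "is_fdga A" shows "unit A \<in> gr A 0"
  using assms unfolding is_fdga_def by (elim conjE) assumption
lemma C10: assumes "is_fdga A" shows "(\<forall>n. \<forall>x\<in>gr A n. mul A (unit A) x = x \<and> mul A x (unit A) = x)"
  using assms unfolding is_fdga_def by (elim conjE) assumption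
lemma C11: assumes "is_fdga A" shows "(\<forall>n. \<forall>x\<in>gr A n. dif A x \<in> gr A (Suc n))"
  using assms unfolding is_fdga_def by (elim conjE) assumption
lemma C12: assumes "is_fdga A" shows "(\<forall>n c. \<forall>x\<in>gr A n. \<forall>y\<in>gr A n.
        dif A (x + y) = dif A x + dif A y \<and> dif A (sc A c x) = sc A c (dif A x))"
  using assms unfolding is_fdga_def by (elim conjE) assumption
lemma C14: assumes "is_fdga A" shows "(\<forall>m n. \<forall>x\<in>gr A m. \<forall>y\<in>gr A n.
        dif A (mul A x y) = mul A (dif A x) y + sgn_mul m (mul A x (dif A y)))"
  using assms unfolding is_fdga_def by (elim conjE) assumption
lemma C15: assumes "is_fdga A" shows "(\<forall>p n. module.subspace (sc A) (filt A p n) \<and> filt A p n \<subseteq> gr A n)"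
  using assms unfolding is_fdga_def by (elim conjE) assumption
lemma C16: assumes "is_fdga A" shows "(\<forall>p n. filt A p n \<subseteq> filt A (p + 1) n)"
  using assms unfolding is_fdga_def by (elim conjE) assumption
lemma C17: assumes "is_fdga A" shows "(\<forall>p n. \<forall>x\<in>filt A p n. dif A x \<in> filt A p (Suc n))"
  using assms unfolding is_fdga_def by (elim conjE) assumption
lemma C18: assumes "is_fdga A" shows "(\<forall>p q m n. \<forall>x\<in>filt A p m. \<forall>y\<in>filt A q n. mul A x y \<in> filt A (p + q) (m + n))"
  using assms unfolding is_fdga_def by (elim conjE) assumption
lemma C19: assumes "is_fdga A" shows "(\<forall>n. \<exists>q. filt A q n = {0})"
  using assms unfolding is_fdga_def by (elim conjE) assumption
lemma C20: assumes "is_fdga A" shows "(\<forall>n. (\<Union>p. filt A p n) = gr A n)"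
  using assms unfolding is_fdga_def by (elim conjE) assumption
lemma C21: assumes "is_fdga A" shows "unit A \<in> filt A 0 0"
  using assms unfolding is_fdga_def by (elim conjE) assumption

lemma fd_mod: assumes "is_fdga A" shows "module (sc A)"
  using assms unfolding is_fdga_def module_iff_vector_space by (elim conjE) assumption

lemma fd_sub: assumes "is_fdga A" shows "module.subspace (sc A) (filt A p n)"
  using C15[OF assms] by blast

lemma fd_fg: assumes "is_fdga A" shows "filt A p n \<subseteq> gr A n"
  using C15[OF assms] by blast

lemma fd_0: assumes "is_fdga A" shows "0 \<in> filt A p n"
  using module.subspace_0[OF fd_mod[OF assms] fd_sub[OF assms]] .

lemma fd_add: assumes "is_fdga A" "x \<in> filt A p n" "y \<in> filt A p n" shows "x + y \<in> filt A p n"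
  using module.subspace_add[OF fd_mod[OF assms(1)] fd_sub[OF assms(1)]] assms(2,3) by blast

lemma fd_neg: assumes "is_fdga A" "x \<in> filt A p n" shows "- x \<in> filt A p n"
  using module.subspace_neg[OF fd_mod[OF assms(1)] fd_sub[OF assms(1)]] assms(2) by blast

lemma fd_sgn: assumes "is_fdga A" "x \<in> filt A p n" shows "sgn_mul k x \<in> filt A p n"
  using fd_neg[OF assms] assms(2) unfolding sgn_mul_def by auto

lemma fd_sum: assumes "is_fdga A" "\<And>x. x \<in> S \<Longrightarrow> f x \<in> filt A p n" shows "sum f S \<in> filt A p n"
  using module.subspace_sum[OF fd_mod[OF assms(1)] fd_sub[OF assms(1)]] assms(2) by blast

lemma fd_step: assumes "is_fdga A" shows "filt A p n \<subseteq> filt A (p + 1) n"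
  using C16[OF assms] by blast

lemma fd_mono: assumes "is_fdga A" "p \<le> q" shows "filt A p n \<subseteq> filt A q n"
proof -
  obtain k where k: "q = p + int k" using assms(2) zle_iff_zadd by blast
  have "filt A p n \<subseteq> filt A (p + int k) n"
  proof (induction k)
    case 0 then show ?case by simp
  next
    case (Suc k)
    have "filt A (p + int k) n \<subseteq> filt A (p + int k + 1) n" by (rule fd_step[OF assms(1)])
    moreover have "p + int (Suc k) = p + int k + 1" by simp
    ultimately show ?case using Suc by (metis order_trans)
  qed
  then show ?thesis using k by simp
qed

lemma fd_mul: assumes "is_fdga A" "x \<in> filt A p m" "y \<in> filt A q n" "s = p + q" "t = m + n"
  shows "mul A x y \<in> filt A s t"
  using assms(2-) C18[OF assms(1)] by blast

lemma fd_dif: assumes "is_fdga A" "x \<in> filt A p n" shows "dif A x \<in> filt A p (Suc n)"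
  using assms(2-) C17[OF assms(1)] by blast

lemma fd_grsub: assumes "is_fdga A" shows "module.subspace (sc A) (gr A n)"
  using C2[OF assms] by blast

lemma fd_grmul: assumes "is_fdga A" "x \<in> gr A m" "y \<in> gr A n" "t = m + n"
  shows "mul A x y \<in> gr A t"
  using assms(2-) C4[OF assms(1)] by blast

lemma fd_grdif: assumes "is_fdga A" "x \<in> gr A n" shows "dif A x \<in> gr A (Suc n)"
  using assms(2-) C11[OF assms(1)] by blast

lemma fd_difadd: assumes "is_fdga A" "x \<in> gr A n" "y \<in> gr A n" shows "dif A (x + y) = dif A x + dif A y"
  using assms(2-) C12[OF assms(1)] by blast

lemma fd_difsc: assumes "is_fdga A" "x \<in> gr A n" shows "dif A (sc A c x) = sc A c (dif A x)"
  using assms(2-) C12[OF assms(1)] by blast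

lemma fd_leib: assumes "is_fdga A" "x \<in> gr A m" "y \<in> gr A n"
  shows "dif A (mul A x y) = mul A (dif A x) y + sgn_mul m (mul A x (dif A y))"
  using assms(2-) C14[OF assms(1)] by blast

lemma fd_unitg: assumes "is_fdga A" shows "unit A \<in> gr A 0"
  using C9[OF assms] by blast

lemma fd_unitf: assumes "is_fdga A" shows "unit A \<in> filt A 0 0"
  using C21[OF assms] by blast

lemma fd_unitl: assumes "is_fdga A" "x \<in> gr A n" shows "mul A (unit A) x = x"
  using assms(2-) C10[OF assms(1)] by blast

lemma fd_unitr: assumes "is_fdga A" "x \<in> gr A n" shows "mul A x (unit A) = x"
  using assms(2-) C10[OF assms(1)] by blast

lemma xx0: "(x::'a::ab_group_add) = x + x \<Longrightarrow> x = 0"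
  by (metis add_cancel_right_right)

lemma fd_dif0: assumes "is_fdga A" shows "dif A 0 = 0"
proof -
  have z: "0 \<in> gr A 0" using module.subspace_0[OF fd_mod[OF assms] fd_grsub[OF assms]] .
  have "dif A (0 + 0) = dif A 0 + dif A 0" using fd_difadd[OF assms z z] .
  then show ?thesis using xx0 by (metis add_0)
qed

lemma fd_difunit: assumes "is_fdga A" shows "dif A (unit A) = 0"
proof -
  have u: "unit A \<in> gr A 0" by (rule fd_unitg[OF assms])
  have d: "dif A (unit A) \<in> gr A (Suc 0)" using fd_grdif[OF assms u] .
  have "dif A (mul A (unit A) (unit A)) = mul A (dif A (unit A)) (unit A) + sgn_mul 0 (mul A (unit A) (dif A (unit A)))"
    using fd_leib[OF assms u u] .
  then have "dif A (unit A) = dif A (unit A) + dif A (unit A)"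
    using fd_unitl[OF assms u] fd_unitr[OF assms d] fd_unitl[OF assms d] by (simp only: sgn_mul_def even_zero if_True)
  then show ?thesis by (rule xx0)
qed

lemma fd_difsum: assumes "is_fdga A" "finite S" "\<And>x. x \<in> S \<Longrightarrow> f x \<in> gr A n"
  shows "dif A (sum f S) = (\<Sum>x\<in>S. dif A (f x))"
  using assms(2,3)
proof (induction S rule: finite_induct)
  case empty then show ?case using fd_dif0[OF assms(1)] by simp
next
  case (insert x F)
  have fx: "f x \<in> gr A n" using insert.prems by simp
  have fF: "\<And>y. y \<in> F \<Longrightarrow> f y \<in> gr A n" using insert.prems by simp
  have s: "sum f F \<in> gr A n"
    by (rule module.subspace_sum[OF fd_mod[OF assms(1)] fd_grsub[OF assms(1)]]) (rule fF)
  have "dif A (sum f (insert x F)) = dif A (f x + sum f F)"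
    by (simp add: insert.hyps)
  also have "\<dots> = dif A (f x) + dif A (sum f F)"
    by (rule fd_difadd[OF assms(1) fx s])
  also have "\<dots> = dif A (f x) + (\<Sum>y\<in>F. dif A (f y))"
    using insert.IH[OF fF] by simp
  also have "\<dots> = (\<Sum>y\<in>insert x F. dif A (f y))"
    by (simp add: insert.hyps)
  finally show ?case .
qed

lemma fd_foldr:
  assumes F: "is_fdga A" and "\<And>v. v \<in> set xs \<Longrightarrow> v \<in> filt A p n \<and> dif A v \<in> filt A (p - 1) (Suc n)"
  shows "foldr (mul A) xs (unit A) \<in> filt A (int (length xs) * p) (length xs * n) \<and>
         dif A (foldr (mul A) xs (unit A)) \<in> filt A (int (length xs) * p - 1) (Suc (length xs * n))"
  using assms(2)
proof (induction xs)
  case Nil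
  then show ?case using fd_unitf[OF F] fd_difunit[OF F] fd_0[OF F] by simp
next
  case (Cons v xs)
  let ?y = "foldr (mul A) xs (unit A)"
  let ?l = "length xs"
  have IH: "?y \<in> filt A (int ?l * p) (?l * n)" "dif A ?y \<in> filt A (int ?l * p - 1) (Suc (?l * n))"
    using Cons by auto
  have v: "v \<in> filt A p n" "dif A v \<in> filt A (p - 1) (Suc n)" using Cons.prems by auto
  have vg: "v \<in> gr A n" using v(1) fd_fg[OF F] by blast
  have yg: "?y \<in> gr A (?l * n)" using IH(1) fd_fg[OF F] by blast
  have m1: "mul A v ?y \<in> filt A (int (length (v # xs)) * p) (length (v # xs) * n)"
    by (rule fd_mul[OF F v(1) IH(1)]) (simp_all add: algebra_simps)
  have e1: "mul A (dif A v) ?y \<in> filt A (int (length (v # xs)) * p - 1) (Suc (length (v # xs) * n))"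
    by (rule fd_mul[OF F v(2) IH(1)]) (simp_all add: algebra_simps)
  have e2: "mul A v (dif A ?y) \<in> filt A (int (length (v # xs)) * p - 1) (Suc (length (v # xs) * n))"
    by (rule fd_mul[OF F v(1) IH(2)]) (simp_all add: algebra_simps)
  have "dif A (mul A v ?y) = mul A (dif A v) ?y + sgn_mul n (mul A v (dif A ?y))"
    by (rule fd_leib[OF F vg yg])
  then have "dif A (mul A v ?y) \<in> filt A (int (length (v # xs)) * p - 1) (Suc (length (v # xs) * n))"
    using fd_add[OF F e1 fd_sgn[OF F e2]] by simp
  then show ?case using m1 by simp
qed


lemma main_dif:
  assumes E: "E_cofibrant (Suc r) A" and xq: "x \<in> filt A q m"
  shows "dif A x \<in> filt A (q - 1) (Suc m)"
proof -
  have F: "is_fdga A" using E unfolding E_cofibrant_def by (rule conjunct1)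
  from E obtain B where
    u: "unit A \<noteq> 0" and B00: "B 0 0 = range (\<lambda>c. sc A c (unit A))"
    and B0m: "\<forall>m. m \<noteq> 0 \<longrightarrow> B 0 m = {0}"
    and Bmono: "\<forall>i m. B i m \<subseteq> B (Suc i) m \<and> B i m \<subseteq> gr A m"
    and Bex: "\<forall>m. (\<Union>i. B i m) = gr A m"
    and ext: "\<forall>i. is_ext (Suc r) A (B i) (B (Suc i))"
    unfolding E_cofibrant_def by (elim exE conjE) (rule that, assumption+)
  have M: "module (sc A)" by (rule fd_mod[OF F])
  have unitB: "unit A \<in> B i 0" for i
  proof (induction i)
    case 0
    have "sc A 1 (unit A) = unit A" using module.scale_one[OF M] by blast
    then show ?case using B00 by (metis rangeI)
  next
    case (Suc i) thus ?case using Bmono by blast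
  qed
  have key: "\<forall>q m x. x \<in> filt A q m \<and> x \<in> B i m \<longrightarrow> dif A x \<in> filt A (q - 1) (Suc m)" for i
  proof (induction i)
    case 0
    show ?case
    proof (intro allI impI)
      fix q m x assume H: "x \<in> filt A q m \<and> x \<in> B 0 m"
      show "dif A x \<in> filt A (q - 1) (Suc m)"
      proof (cases "m = 0")
        case True
        then obtain c where c: "x = sc A c (unit A)" using H B00 by auto
        have "dif A x = sc A c (dif A (unit A))" using c fd_difsc[OF F fd_unitg[OF F]] by simp
        also have "\<dots> = 0" using fd_difunit[OF F] module.scale_zero_right[OF M] by simp
        finally show ?thesis using fd_0[OF F] by simp
      next
        case False
        then have "x = 0" using H B0m by blast
        then show ?thesis using fd_dif0[OF F] fd_0[OF F] by simp
      qed
    qed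
  next
    case (Suc i)
    from ext have exti: "is_ext (Suc r) A (B i) (B (Suc i))" by blast
    from exti obtain n p V X where
      V: "V \<subseteq> gr A n" and XV: "X \<subseteq> V"
      and dV: "\<forall>v\<in>V. dif A v \<in> filt A (p - int (Suc r)) (Suc n) \<inter> B i (Suc n)"
      and FB': "\<forall>q m. filt A q m \<inter> B (Suc i) m =
           {comb A a | a. coef_ok X n m (\<lambda>k d. filt A (q - int k * p) d \<inter> B i d) a}"
      unfolding is_ext_def by (elim exE conjE) (rule that, assumption+)
    have Xf: "v \<in> filt A p n \<and> dif A v \<in> filt A (p - 1) (Suc n)" if vX: "v \<in> X" for v
    proof
      define a where "a = (\<lambda>M. if M = {#v#} then unit A else 0)"
      have vg: "v \<in> gr A n" using vX XV V by blast
      have S: "{M. a M \<noteq> 0} = {{#v#}}" using u by (auto simp: a_def)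
      have co: "coef_ok X n n (\<lambda>k d. filt A (p - int k * p) d \<inter> B i d) a"
        unfolding coef_ok_def S using vX fd_unitf[OF F] unitB
        by (auto simp: a_def monoms_def)
      have mp1: "mprod A {#v#} = v" unfolding mprod_def using fd_unitr[OF F vg] by simp
      have "comb A a = v" unfolding comb_def S using mp1 fd_unitl[OF F vg] by (simp add: a_def)
      then have "v \<in> filt A p n \<inter> B (Suc i) n" using FB' co by blast
      then show "v \<in> filt A p n" by blast
      have "dif A v \<in> filt A (p - int (Suc r)) (Suc n)" using dV vX XV by blast
      then show "dif A v \<in> filt A (p - 1) (Suc n)" using fd_mono[OF F, of "p - int (Suc r)" "p - 1"] by auto
    qed
    have mp: "mprod A M \<in> filt A (int (size M) * p) (size M * n) \<and>
              dif A (mprod A M) \<in> filt A (int (size M) * p - 1) (Suc (size M * n))"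
      if sM: "set_mset M \<subseteq> X" for M
    proof -
      obtain xs where xs: "mset xs = M" using ex_mset by blast
      let ?xs = "SOME xs. mset xs = M"
      have m: "mset ?xs = M" using someI_ex[of "\<lambda>xs. mset xs = M"] xs by blast
      hence l: "length ?xs = size M" "set ?xs = set_mset M" by (metis size_mset, metis set_mset_mset)
      have hx: "\<And>v. v \<in> set ?xs \<Longrightarrow> v \<in> filt A p n \<and> dif A v \<in> filt A (p - 1) (Suc n)"
        using Xf sM l(2) by blast
      have "foldr (mul A) ?xs (unit A) \<in> filt A (int (length ?xs) * p) (length ?xs * n) \<and>
         dif A (foldr (mul A) ?xs (unit A)) \<in> filt A (int (length ?xs) * p - 1) (Suc (length ?xs * n))"
        by (rule fd_foldr[OF F hx])
      then show ?thesis unfolding mprod_def l(1) .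
    qed
    show ?case
    proof (intro allI impI)
      fix q m x assume H: "x \<in> filt A q m \<and> x \<in> B (Suc i) m"
      then obtain a where xa: "x = comb A a"
        and co: "coef_ok X n m (\<lambda>k d. filt A (q - int k * p) d \<inter> B i d) a"
        using FB' by blast
      let ?S = "{M. a M \<noteq> 0}"
      have fin: "finite ?S" using co unfolding coef_ok_def by blast
      have trm: "mul A (a M) (mprod A M) \<in> gr A m \<and>
                 dif A (mul A (a M) (mprod A M)) \<in> filt A (q - 1) (Suc m)" if MS: "M \<in> ?S" for M
      proof -
        define k where "k = size M"
        define d where "d = m - size M * n"
        have c: "M \<in> monoms X n" "k * n \<le> m" "a M \<in> filt A (q - int k * p) d" "a M \<in> B i d"
          using co MS unfolding coef_ok_def k_def d_def by auto
        have sX: "set_mset M \<subseteq> X" using c(1) unfolding monoms_def by auto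
        have mpM: "mprod A M \<in> filt A (int k * p) (k * n)"
             "dif A (mprod A M) \<in> filt A (int k * p - 1) (Suc (k * n))"
          using mp[OF sX] unfolding k_def by auto
        have aG: "a M \<in> gr A d" using c(3) fd_fg[OF F] by blast
        have mG: "mprod A M \<in> gr A (k * n)" using mpM(1) fd_fg[OF F] by blast
        have dm: "d + k * n = m" using c(2) unfolding d_def k_def by simp
        have g: "mul A (a M) (mprod A M) \<in> gr A m"
          by (rule fd_grmul[OF F aG mG]) (use dm in simp)
        have IHa: "dif A (a M) \<in> filt A (q - int k * p - 1) (Suc d)" using Suc.IH c(3,4) by blast
        have e1: "mul A (dif A (a M)) (mprod A M) \<in> filt A (q - 1) (Suc m)"
          by (rule fd_mul[OF F IHa mpM(1)]) (use dm in simp_all)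
        have e2: "mul A (a M) (dif A (mprod A M)) \<in> filt A (q - 1) (Suc m)"
          by (rule fd_mul[OF F c(3) mpM(2)]) (use dm in simp_all)
        have "dif A (mul A (a M) (mprod A M)) =
              mul A (dif A (a M)) (mprod A M) + sgn_mul d (mul A (a M) (dif A (mprod A M)))"
          by (rule fd_leib[OF F aG mG])
        then show ?thesis using g fd_add[OF F e1 fd_sgn[OF F e2]] by simp
      qed
      have "dif A x = (\<Sum>M\<in>?S. dif A (mul A (a M) (mprod A M)))"
        unfolding xa comb_def by (rule fd_difsum[OF F fin]) (use trm in blast)
      also have "\<dots> \<in> filt A (q - 1) (Suc m)" by (rule fd_sum[OF F]) (use trm in blast)
      finally show "dif A x \<in> filt A (q - 1) (Suc m)" .
    qed
  qed
  have "x \<in> gr A m" using xq fd_fg[OF F] by blast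
  then obtain i where "x \<in> B i m" using Bex by blast
  then show ?thesis using key xq by blast
qed


lemma dec_eq: assumes E: "E_cofibrant (Suc r) A" shows "Dec A p n = filt A (p - int n) n"
  unfolding Dec_def using main_dif[OF E] by auto

lemma dec_sel: "sc (dec_fdga A) = sc A" "gr (dec_fdga A) = gr A" "mul (dec_fdga A) = mul A"
  "unit (dec_fdga A) = unit A" "dif (dec_fdga A) = dif A" "filt (dec_fdga A) = Dec A"
  by (simp_all add: dec_fdga_def)

lemma dec_filt: assumes E: "E_cofibrant (Suc r) A"
  shows "filt (dec_fdga A) p n = filt A (p - int n) n"
  using dec_eq[OF E] by (simp add: dec_sel)

lemma dec_is_fdga: assumes E: "E_cofibrant (Suc r) A" shows "is_fdga (dec_fdga A)"
proof -
  have F: "is_fdga A" using E unfolding E_cofibrant_def by (rule conjunct1)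
  have c1: "\<forall>p n. module.subspace (sc A) (filt A (p - int n) n) \<and> filt A (p - int n) n \<subseteq> gr A n"
    using C15[OF F] by blast
  have c2: "\<forall>p n. filt A (p - int n) n \<subseteq> filt A (p + 1 - int n) n"
  proof (intro allI)
    fix p n
    have eq: "p + 1 - int n = (p - int n) + 1" by simp
    show "filt A (p - int n) n \<subseteq> filt A (p + 1 - int n) n" unfolding eq by (rule fd_step[OF F])
  qed
  have c3: "\<forall>p n. \<forall>x\<in>filt A (p - int n) n. dif A x \<in> filt A (p - int (Suc n)) (Suc n)"
  proof (intro allI ballI)
    fix p n x assume "x \<in> filt A (p - int n) n"
    then have "dif A x \<in> filt A (p - int n - 1) (Suc n)" by (rule main_dif[OF E])
    moreover have "p - int n - 1 = p - int (Suc n)" by simp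
    ultimately show "dif A x \<in> filt A (p - int (Suc n)) (Suc n)" by simp
  qed
  have c4: "\<forall>p q m n. \<forall>x\<in>filt A (p - int m) m. \<forall>y\<in>filt A (q - int n) n.
       mul A x y \<in> filt A (p + q - int (m + n)) (m + n)"
  proof (intro allI ballI)
    fix p q m n x y assume "x \<in> filt A (p - int m) m" "y \<in> filt A (q - int n) n"
    then show "mul A x y \<in> filt A (p + q - int (m + n)) (m + n)"
      by (rule fd_mul[OF F]) simp_all
  qed
  have c5: "\<forall>n. \<exists>q. filt A (q - int n) n = {0}"
  proof
    fix n
    obtain q where "filt A q n = {0}" using C19[OF F] by blast
    then have "filt A (q + int n - int n) n = {0}" by simp
    then show "\<exists>q. filt A (q - int n) n = {0}" by blast
  qed
  have c6: "\<forall>n. (\<Union>p. filt A (p - int n) n) = gr A n"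
  proof
    fix n
    have "(\<Union>p. filt A (p - int n) n) = (\<Union>p. filt A p n)"
    proof (rule set_eqI, rule iffI)
      fix x assume "x \<in> (\<Union>p. filt A (p - int n) n)" then show "x \<in> (\<Union>p. filt A p n)" by blast
    next
      fix x assume "x \<in> (\<Union>p. filt A p n)"
      then obtain p where "x \<in> filt A p n" by blast
      then have "x \<in> filt A (p + int n - int n) n" by simp
      then show "x \<in> (\<Union>p. filt A (p - int n) n)" by blast
    qed
    then show "(\<Union>p. filt A (p - int n) n) = gr A n" using C20[OF F] by simp
  qed
  have c7: "unit A \<in> filt A (0 - int 0) 0" using C21[OF F] by simp
  have fd: "filt (dec_fdga A) = (\<lambda>p n. filt A (p - int n) n)" using dec_filt[OF E] by blast
  show ?thesis
    using F c1 c2 c3 c4 c5 c6 c7 unfolding is_fdga_def fd dec_sel(1-5)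
    by (elim conjE) (intro conjI; assumption)
qed

lemma coef_ok_cong: assumes "\<And>k. k * n \<le> m \<Longrightarrow> C k (m - k * n) = C' k (m - k * n)"
  shows "coef_ok X n m C a = coef_ok X n m C' a"
  unfolding coef_ok_def using assms by metis

lemma dec_comb: "comb (dec_fdga A) = comb A"
  by (simp add: comb_def mprod_def dec_sel fun_eq_iff)

lemma dec_ext: assumes E: "E_cofibrant (Suc r) A" and X: "is_ext (Suc r) A B B'"
  shows "is_ext r (dec_fdga A) B B'"
proof -
  obtain n p V X where
    h1: "module.subspace (sc A) V" and h2: "V \<subseteq> gr A n" and h3: "X \<subseteq> V"
    and h4: "\<not> module.dependent (sc A) X" and h5: "module.span (sc A) X = V"
    and h6: "\<forall>v\<in>V. dif A v \<in> filt A (p - int (Suc r)) (Suc n) \<inter> B (Suc n)"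
    and h7: "\<forall>m. B' m = {comb A a | a. coef_ok X n m (\<lambda>k d. B d) a}"
    and h8: "\<forall>m a. coef_ok X n m (\<lambda>k d. B d) a \<and> comb A a = 0 \<longrightarrow> (\<forall>M. a M = 0)"
    and h9: "\<forall>q m. filt A q m \<inter> B' m =
           {comb A a | a. coef_ok X n m (\<lambda>k d. filt A (q - int k * p) d \<inter> B d) a}"
    using X unfolding is_ext_def by (elim exE conjE) (rule that, assumption+)
  have h6': "\<forall>v\<in>V. dif A v \<in> filt A (p + int n - int r - int (Suc n)) (Suc n) \<inter> B (Suc n)"
  proof -
    have eq: "p + int n - int r - int (Suc n) = p - int (Suc r)" by simp
    show ?thesis unfolding eq using h6 by blast
  qed
  have h9': "\<forall>q m. filt A (q - int m) m \<inter> B' m =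
           {comb A a | a. coef_ok X n m (\<lambda>k d. filt A (q - int k * (p + int n) - int d) d \<inter> B d) a}"
  proof (intro allI)
    fix q m
    have cg: "coef_ok X n m (\<lambda>k d. filt A (q - int m - int k * p) d \<inter> B d) a =
              coef_ok X n m (\<lambda>k d. filt A (q - int k * (p + int n) - int d) d \<inter> B d) a" for a
    proof (rule coef_ok_cong)
      fix k assume kn: "k * n \<le> m"
      have eq: "q - int m - int k * p = q - int k * (p + int n) - int (m - k * n)"
        using kn by (simp add: of_nat_diff algebra_simps)
      show "filt A (q - int m - int k * p) (m - k * n) \<inter> B (m - k * n) =
                 filt A (q - int k * (p + int n) - int (m - k * n)) (m - k * n) \<inter> B (m - k * n)"
        unfolding eq by (rule refl)
    qed
    show "filt A (q - int m) m \<inter> B' m =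
           {comb A a | a. coef_ok X n m (\<lambda>k d. filt A (q - int k * (p + int n) - int d) d \<inter> B d) a}"
      using h9 cg by simp
  qed
  show ?thesis
    unfolding is_ext_def dec_filt[OF E] dec_comb dec_sel(1-5)
    apply (rule exI[of _ n], rule exI[of _ "p + int n"], rule exI[of _ V], rule exI[of _ X])
    apply (intro conjI)
    apply (fact h1)
    apply (fact h2)
    apply (fact h3)
    apply (fact h4)
    apply (fact h5)
    apply (fact h6')
    apply (fact h7)
    apply (fact h8)
    by (fact h9')
qed

theorem lemma2p6:
  fixes r :: nat and A :: "('k::field_char_0, 'a::ab_group_add) fdga"
  assumes "E_cofibrant (Suc r) A"
  shows "(\<forall>n p. Dec A p n = filt A (p - int n) n) \<and> E_cofibrant r (dec_fdga A)"
proof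
  show "\<forall>n p. Dec A p n = filt A (p - int n) n" using dec_eq[OF assms] by blast
  have F: "is_fdga A" using assms unfolding E_cofibrant_def by (rule conjunct1)
  from assms obtain B where
    u: "unit A \<noteq> 0" and B00: "B 0 0 = range (\<lambda>c. sc A c (unit A))"
    and B0m: "\<forall>m. m \<noteq> 0 \<longrightarrow> B 0 m = {0}"
    and B0f: "\<forall>q m. filt A q m \<inter> B 0 m = (if q \<ge> 0 then B 0 m else {0})"
    and Bmono: "\<forall>i m. B i m \<subseteq> B (Suc i) m \<and> B i m \<subseteq> gr A m"
    and Bex: "\<forall>m. (\<Union>i. B i m) = gr A m"
    and ext: "\<forall>i. is_ext (Suc r) A (B i) (B (Suc i))"
    unfolding E_cofibrant_def by (elim exE conjE) (rule that, assumption+)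
  have B0f': "\<forall>q m. filt A (q - int m) m \<inter> B 0 m = (if q \<ge> 0 then B 0 m else {0})"
  proof (intro allI)
    fix q m
    show "filt A (q - int m) m \<inter> B 0 m = (if q \<ge> 0 then B 0 m else {0})"
    proof (cases "m = 0")
      case True then show ?thesis using B0f by simp
    next
      case False
      then have "B 0 m = {0}" using B0m by blast
      then show ?thesis using fd_0[OF F] by auto
    qed
  qed
  have ext': "\<forall>i. is_ext r (dec_fdga A) (B i) (B (Suc i))"
    using dec_ext[OF assms] ext by blast
  show "E_cofibrant r (dec_fdga A)"
    unfolding E_cofibrant_def dec_filt[OF assms] dec_sel(1-5)
    apply (rule conjI[OF dec_is_fdga[OF assms]])
    apply (rule exI[of _ B])
    apply (intro conjI)
          apply (fact u)
         apply (fact B00)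
        apply (fact B0m)
       apply (fact B0f')
      apply (fact Bmono)
     apply (fact Bex)
    by (fact ext')
qed

end
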